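(* Let $C\ge 1$ and $t>0$. Suppose each of $C$ recruitment centres has been open for the same time $t$, so that $t_1=\dots=t_C=t$, and let $n_1,\dots,n_C$ be the observed recruitment counts, with $N_\bullet=\sum_{c=1}^C n_c$. Consider the log-likelihood (up to an additive constant) \[ \ell(\alpha,\beta)=C\alpha\log\beta-\sum_{c=1}^C(\alpha+n_c)\log(\beta+t_c)-C\log\Gamma(\alpha)+\sum_{c=1}^C\log\Gamma(\alpha+n_c),\qquad \alpha,\beta>0. \] Then the maximum likelihood estimator $(\widehat\alpha,\widehat\beta)$ maximising $\ell$ satisfies $\widehat\alpha/\widehat\beta=N_\bullet/(Ct)$.
   Context: This is the marginal log-likelihood of the Poisson–Gamma recruitment model: the centre rates $\lambda_1,\dots,\lambda_C$ are independent $\mathsf{Gam}(\alpha,\beta)$ (shape $\alpha$, rate $\beta$, density $\beta^\alpha\lambda^{\alpha-1}e^{-\beta\lambda}/\Gamma(\alpha)$), and given $\lambda_c$ the count $n_c$ at centre $c$ is Poisson with mean $\lambda_c t_c$, where $t_c$ is the time centre $c$ has been open. *)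

theory Defs
  imports "HOL-Analysis.Analysis"
begin

text \<open>Poisson-Gamma marginal log-likelihood (up to an additive constant), centres indexed 1..C,
  counts n c, opening times tt c.\<close>
definition loglik :: "nat \<Rightarrow> (nat \<Rightarrow> real) \<Rightarrow> (nat \<Rightarrow> nat) \<Rightarrow> real \<Rightarrow> real \<Rightarrow> real" where
  "loglik C tt n \<alpha> \<beta> =
     real C * \<alpha> * ln \<beta>
     - (\<Sum>c\<in>{1..C}. (\<alpha> + real (n c)) * ln (\<beta> + tt c))
     - real C * ln (Gamma \<alpha>)
     + (\<Sum>c\<in>{1..C}. ln (Gamma (\<alpha> + real (n c))))"

definition is_mle :: "nat \<Rightarrow> (nat \<Rightarrow> real) \<Rightarrow> (nat \<Rightarrow> nat) \<Rightarrow> real \<Rightarrow> real \<Rightarrow> bool" where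
  "is_mle C tt n a b \<longleftrightarrow> a > 0 \<and> b > 0 \<and>
     (\<forall>\<alpha> \<beta>. \<alpha> > 0 \<longrightarrow> \<beta> > 0 \<longrightarrow> loglik C tt n \<alpha> \<beta> \<le> loglik C tt n a b)"

end

theory Submission
  imports Defs
begin

theorem lemma1:
  fixes C :: nat and t :: real and tt :: "nat \<Rightarrow> real" and n :: "nat \<Rightarrow> nat" and a b :: real
  assumes "C \<ge> 1" and "t > 0"
    and "\<forall>c\<in>{1..C}. tt c = t"
    and "is_mle C tt n a b"
  shows "a / b = real (\<Sum>c\<in>{1..C}. n c) / (real C * t)"
proof -
  define N where "N = real (\<Sum>c\<in>{1..C}. n c)"
  define K where "K = - real C * ln (Gamma a) + (\<Sum>c\<in>{1..C}. ln (Gamma (a + real (n c))))"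
  define h where "h = (\<lambda>\<beta>. real C * a * ln \<beta> - (real C * a + N) * ln (\<beta> + t))"
  have a0: "a > 0" and b0: "b > 0" and mx: "\<And>\<beta>. \<beta> > 0 \<Longrightarrow> loglik C tt n a \<beta> \<le> loglik C tt n a b"
    using assms(4) unfolding is_mle_def by auto
  have eq: "loglik C tt n a \<beta> = h \<beta> + K" for \<beta>
  proof -
    have "(\<Sum>c\<in>{1..C}. (a + real (n c)) * ln (\<beta> + tt c)) = (\<Sum>c\<in>{1..C}. (a + real (n c)) * ln (\<beta> + t))"
      using assms(3) by (intro sum.cong) auto
    also have "\<dots> = (real C * a + N) * ln (\<beta> + t)"
      by (simp add: N_def sum_distrib_right [symmetric] sum.distrib)
    finally show ?thesis unfolding loglik_def h_def K_def by simp
  qed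
  have loc: "\<forall>y. \<bar>b - y\<bar> < b \<longrightarrow> h y \<le> h b"
    using mx eq by (smt (verit))
  have D0: "DERIV h b :> (real C * a * inverse b - (real C * a + N) * (inverse (b + t) * (1 + 0)))"
  proof -
    have l1: "DERIV ln b :> inverse b" using b0 by (rule DERIV_ln)
    have l2: "DERIV (\<lambda>z. ln (z + t)) b :> inverse (b + t) * (1 + 0)"
    proof -
      have g: "DERIV (\<lambda>z. z + t) b :> 1 + 0" by (intro derivative_intros)
      have f: "DERIV ln (b + t) :> inverse (b + t)" using b0 assms(2) by (intro DERIV_ln) simp
      show ?thesis using DERIV_chain2[OF f g] by simp
    qed
    show ?thesis unfolding h_def
      using DERIV_diff[OF DERIV_cmult[OF l1, of "real C * a"] DERIV_cmult[OF l2, of "real C * a + N"]] by simp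
  qed
  have D: "DERIV h b :> (real C * a / b - (real C * a + N) / (b + t))"
    using D0 by (simp add: divide_inverse)
  have "real C * a / b - (real C * a + N) / (b + t) = 0"
    by (rule DERIV_local_max[OF D b0 loc])
  moreover have pos: "b * b + b * t > 0" using b0 assms(2) by (simp add: add_pos_pos)
  ultimately have "real C * a * t = N * b"
    using b0 assms(2) by (auto simp: field_simps)
  moreover have "real C > 0" using assms(1) by simp
  ultimately show ?thesis unfolding N_def[symmetric] using b0 assms(2)
    by (simp add: field_simps)
qed

end
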